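(* Let $\forall\overline p\,\Gamma/^2\phi$ be a $\Pi_2$-rule with $\overline p=p_1,\dots,p_n$ and let $C=\{p_1,\dots,p_n\}$. Then $\forall\overline p\,\Gamma/^2\phi$ is admissible over $\vdash_S$ if and only if for every $C$-invariant substitution $\sigma$, $\vdash_S\sigma(\Gamma)$ implies $\vdash_S\sigma(\phi)$.
   Context: $\vdash$ is a finitary structural logic over a signature $\mathcal L$, and $\vdash_S$ a Hilbert-style system for it. A $\Pi_2$-rule $\forall\overline p\,\Gamma/^2\phi$ consists of a finite set of formulas $\Gamma=\{\phi_i(\overline p,\overline q)\}$ and a formula $\phi(\overline q)$ not containing the variables $\overline p$. For a set $\Sigma$ of $\Pi_2$-rules, $\vdash_{S\oplus\Sigma}\psi$ means there is a sequence $\psi_0,\dots,\psi_m=\psi$ where each $\psi_i$ is an axiom instance of $\vdash_S$, or follows from earlier members by a rule of $\vdash_S$, or $\psi_i=\chi(\overline\xi/\overline q)$ where $\forall\overline p\{\mu_0,\dots,\mu_k\}/^2\chi(\overline q)\in\Sigma$ and each $\mu_j(\overline r/\overline p,\overline\xi/\overline q)$ occurs earlier, with $\overline r$ fresh variables not occurring in $\overline\xi$. A $\Pi_2$-rule $\rho$ is admissible over $\vdash_S$ if for all $\psi$, $\vdash_{S\oplus\{\rho\}}\psi$ implies $\vdash_S\psi$. For a finite set $C$ of variables, a substitution $\sigma$ is $C$-invariant if $\sigma(p)=p$ for $p\in C$ and, for every variable $q\notin C$, $\sigma(q)$ contains no variable from $C$. *)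

theory Defs
  imports Main
begin

datatype ('f, 'v) form = Var 'v | Op 'f "('f, 'v) form list"

fun vars :: "('f, 'v) form \<Rightarrow> 'v set" where
  "vars (Var v) = {v}"
| "vars (Op f ts) = (\<Union>t\<in>set ts. vars t)"

fun subst :: "('v \<Rightarrow> ('f, 'v) form) \<Rightarrow> ('f, 'v) form \<Rightarrow> ('f, 'v) form" where
  "subst \<sigma> (Var v) = \<sigma> v"
| "subst \<sigma> (Op f ts) = Op f (map (subst \<sigma>) ts)"

text \<open>A Hilbert-style system S: a set of axiom schemata Ax and a set of finitary rules
  (premises, conclusion); instances are obtained by arbitrary substitutions.\<close>

type_synonym ('f, 'v) hilbert = "('f, 'v) form set \<times> ((('f, 'v) form list \<times> ('f, 'v) form) set)"

definition hilbert_step :: "('f, 'v) hilbert \<Rightarrow> ('f, 'v) form list \<Rightarrow> ('f, 'v) form \<Rightarrow> bool" where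
  "hilbert_step S prev \<psi> \<longleftrightarrow>
     (\<exists>a\<in>fst S. \<exists>\<sigma>. \<psi> = subst \<sigma> a)
   \<or> (\<exists>(prems, c)\<in>snd S. \<exists>\<sigma>. \<psi> = subst \<sigma> c \<and> (\<forall>\<mu>\<in>set prems. subst \<sigma> \<mu> \<in> set prev))"

type_synonym ('f, 'v) pi2rule = "'v list \<times> ('f, 'v) form list \<times> ('f, 'v) form"

definition pi2_rule :: "('f, 'v) pi2rule \<Rightarrow> bool" where
  "pi2_rule \<rho> \<longleftrightarrow> (case \<rho> of (ps, \<Gamma>, \<phi>) \<Rightarrow> vars \<phi> \<inter> set ps = {})"

text \<open>One application of a Pi_2-rule: psi = chi(xi/q), and each mu_j(r/p, xi/q) occurs
  earlier, with r fresh (distinct) variables not occurring in xi.\<close>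

definition pi2_step :: "('f, 'v) pi2rule \<Rightarrow> ('f, 'v) form list \<Rightarrow> ('f, 'v) form \<Rightarrow> bool" where
  "pi2_step \<rho> prev \<psi> \<longleftrightarrow> (case \<rho> of (ps, \<Gamma>, \<phi>) \<Rightarrow>
     (\<exists>\<sigma> r. inj_on r (set ps)
        \<and> (\<forall>p\<in>set ps. \<forall>q\<in>((\<Union>\<mu>\<in>set \<Gamma>. vars \<mu>) \<union> vars \<phi>) - set ps. r p \<notin> vars (\<sigma> q))
        \<and> \<psi> = subst \<sigma> \<phi>
        \<and> (\<forall>\<mu>\<in>set \<Gamma>. subst (\<lambda>v. if v \<in> set ps then Var (r v) else \<sigma> v) \<mu> \<in> set prev)))"

definition derivable :: "('f, 'v) hilbert \<Rightarrow> ('f, 'v) form \<Rightarrow> bool" where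
  "derivable S \<psi> \<longleftrightarrow> (\<exists>xs. xs \<noteq> [] \<and> last xs = \<psi> \<and>
      (\<forall>i<length xs. hilbert_step S (take i xs) (xs ! i)))"

definition derivable_ext :: "('f, 'v) hilbert \<Rightarrow> ('f, 'v) pi2rule set \<Rightarrow> ('f, 'v) form \<Rightarrow> bool" where
  "derivable_ext S \<Sigma> \<psi> \<longleftrightarrow> (\<exists>xs. xs \<noteq> [] \<and> last xs = \<psi> \<and>
      (\<forall>i<length xs. hilbert_step S (take i xs) (xs ! i)
                   \<or> (\<exists>\<rho>\<in>\<Sigma>. pi2_step \<rho> (take i xs) (xs ! i))))"

definition admissible :: "('f, 'v) hilbert \<Rightarrow> ('f, 'v) pi2rule \<Rightarrow> bool" where
  "admissible S \<rho> \<longleftrightarrow> (\<forall>\<psi>. derivable_ext S {\<rho>} \<psi> \<longrightarrow> derivable S \<psi>)"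

definition C_invariant :: "'v set \<Rightarrow> ('v \<Rightarrow> ('f, 'v) form) \<Rightarrow> bool" where
  "C_invariant C \<sigma> \<longleftrightarrow> (\<forall>p\<in>C. \<sigma> p = Var p) \<and> (\<forall>q. q \<notin> C \<longrightarrow> vars (\<sigma> q) \<inter> C = {})"

end

theory Submission
  imports Defs
begin

definition valid :: "('f, 'v) hilbert \<Rightarrow> ('f, 'v) form list \<Rightarrow> bool" where
  "valid S xs \<longleftrightarrow> (\<forall>i<length xs. hilbert_step S (take i xs) (xs ! i))"

lemma subst_comp: "subst \<theta> (subst \<sigma> t) = subst (\<lambda>v. subst \<theta> (\<sigma> v)) t"
  by (induction t) auto

lemma subst_cong: "(\<And>v. v \<in> vars t \<Longrightarrow> \<sigma> v = \<tau> v) \<Longrightarrow> subst \<sigma> t = subst \<tau> t"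
  by (induction t) auto

lemma subst_Var: "subst Var t = t"
  by (induction t) (auto simp: map_idI)

lemma vars_subst: "vars (subst \<sigma> t) = (\<Union>v\<in>vars t. vars (\<sigma> v))"
  by (induction t) auto

lemma finite_vars: "finite (vars t)"
  by (induction t) auto

lemma hilbert_step_mono:
  "set prev \<subseteq> set prev' \<Longrightarrow> hilbert_step S prev \<psi> \<Longrightarrow> hilbert_step S prev' \<psi>"
  unfolding hilbert_step_def by fastforce

lemma valid_append: "valid S xs \<Longrightarrow> valid S ys \<Longrightarrow> valid S (xs @ ys)"
  unfolding valid_def
proof (intro allI impI)
  fix i assume a: "\<forall>i<length xs. hilbert_step S (take i xs) (xs ! i)"
    "\<forall>i<length ys. hilbert_step S (take i ys) (ys ! i)" "i < length (xs @ ys)"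
  show "hilbert_step S (take i (xs @ ys)) ((xs @ ys) ! i)"
  proof (cases "i < length xs")
    case True thus ?thesis using a by (simp add: nth_append)
  next
    case False
    then have "hilbert_step S (take (i - length xs) ys) ((xs @ ys) ! i)"
      using a by (simp add: nth_append)
    moreover have "set (take (i - length xs) ys) \<subseteq> set (take i (xs @ ys))"
      using False by auto
    ultimately show ?thesis using hilbert_step_mono by blast
  qed
qed

lemma derivable_iff: "derivable S \<psi> \<longleftrightarrow> (\<exists>xs. valid S xs \<and> \<psi> \<in> set xs)"
proof
  assume "derivable S \<psi>"
  then show "\<exists>xs. valid S xs \<and> \<psi> \<in> set xs"
    unfolding derivable_def valid_def by auto
next
  assume "\<exists>xs. valid S xs \<and> \<psi> \<in> set xs"
  then obtain xs i where v: "valid S xs" and i: "i < length xs" "\<psi> = xs ! i"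
    by (auto simp: in_set_conv_nth)
  let ?ys = "take (Suc i) xs"
  have "?ys \<noteq> []" "last ?ys = \<psi>" using i by (auto simp: take_Suc_conv_app_nth)
  moreover have "\<forall>j<length ?ys. hilbert_step S (take j ?ys) (?ys ! j)"
    using v i unfolding valid_def by (simp add: min_def)
  ultimately show "derivable S \<psi>" unfolding derivable_def by blast
qed

lemma valid_concat: "(\<forall>x\<in>set L. derivable S x) \<Longrightarrow> \<exists>xs. valid S xs \<and> set L \<subseteq> set xs"
proof (induction L)
  case Nil
  have "valid S []" by (simp add: valid_def)
  then show ?case by auto
next
  case (Cons a L)
  then obtain xs where "valid S xs" "set L \<subseteq> set xs" by auto
  moreover obtain ys where "valid S ys" "a \<in> set ys" using Cons.prems derivable_iff[of S a] by auto
  ultimately show ?case by (intro exI[of _ "xs @ ys"]) (auto intro: valid_append)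
qed

lemma derivable_step:
  assumes "\<forall>x\<in>set L. derivable S x" "hilbert_step S L \<psi>"
  shows "derivable S \<psi>"
proof -
  obtain xs where xs: "valid S xs" "set L \<subseteq> set xs" using valid_concat assms(1) by blast
  have "valid S (xs @ [\<psi>])"
    using xs assms(2) hilbert_step_mono[of L xs S \<psi>]
    unfolding valid_def by (auto simp: nth_append less_Suc_eq)
  then show ?thesis using derivable_iff[of S \<psi>] by auto
qed

lemma valid_subst: "valid S xs \<Longrightarrow> valid S (map (subst \<theta>) xs)"
  unfolding valid_def
proof (intro allI impI)
  fix i assume a: "\<forall>i<length xs. hilbert_step S (take i xs) (xs ! i)" "i < length (map (subst \<theta>) xs)"
  then have h: "hilbert_step S (take i xs) (xs ! i)" by simp
  show "hilbert_step S (take i (map (subst \<theta>) xs)) (map (subst \<theta>) xs ! i)"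
    using h
  proof (unfold hilbert_step_def[of S "take i xs"], elim disjE)
    assume "\<exists>a\<in>fst S. \<exists>\<sigma>. xs ! i = subst \<sigma> a"
    then obtain a \<sigma> where "a \<in> fst S" "xs ! i = subst \<sigma> a" by blast
    then have "map (subst \<theta>) xs ! i = subst (\<lambda>v. subst \<theta> (\<sigma> v)) a" using a(2) by (simp add: subst_comp)
    then show ?thesis using \<open>a \<in> fst S\<close> unfolding hilbert_step_def by blast
  next
    assume "\<exists>(prems, c)\<in>snd S. \<exists>\<sigma>. xs ! i = subst \<sigma> c \<and> (\<forall>\<mu>\<in>set prems. subst \<sigma> \<mu> \<in> set (take i xs))"
    then obtain prems c \<sigma> where pc: "(prems, c) \<in> snd S" "xs ! i = subst \<sigma> c"
      "\<forall>\<mu>\<in>set prems. subst \<sigma> \<mu> \<in> set (take i xs)" by blast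
    have "map (subst \<theta>) xs ! i = subst (\<lambda>v. subst \<theta> (\<sigma> v)) c"
      using pc a(2) by (simp add: subst_comp)
    moreover have "\<forall>\<mu>\<in>set prems. subst (\<lambda>v. subst \<theta> (\<sigma> v)) \<mu> \<in> set (take i (map (subst \<theta>) xs))"
      using pc(3) by (auto simp: subst_comp[symmetric] take_map)
    ultimately show ?thesis using pc(1) unfolding hilbert_step_def by blast
  qed
qed

lemma derivable_subst: "derivable S \<psi> \<Longrightarrow> derivable S (subst \<theta> \<psi>)"
  using valid_subst derivable_iff by (metis image_eqI set_map)

lemma key:
  assumes inf: "infinite (UNIV :: 'v set)"
    and disj: "vars \<phi> \<inter> set ps = {}"
    and cond: "\<forall>\<sigma>. C_invariant (set ps) \<sigma> \<longrightarrow>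
       (\<forall>\<mu>\<in>set \<Gamma>. derivable S (subst \<sigma> \<mu>)) \<longrightarrow> derivable S (subst \<sigma> \<phi>)"
    and st: "pi2_step (ps, \<Gamma>, \<phi>) prev \<psi>"
    and der: "\<forall>x\<in>set prev. derivable S x"
  shows "derivable S (\<psi> :: ('f,'v) form)"
proof -
  define C where "C = set ps"
  define Rel where "Rel = (\<Union>\<mu>\<in>set \<Gamma>. vars \<mu>) \<union> vars \<phi>"
  obtain \<sigma> r where inj: "inj_on r C"
    and fresh: "\<forall>p\<in>C. \<forall>q\<in>Rel - C. r p \<notin> vars (\<sigma> q)"
    and psi: "\<psi> = subst \<sigma> \<phi>"
    and prem: "\<forall>\<mu>\<in>set \<Gamma>. subst (\<lambda>v. if v \<in> C then Var (r v) else \<sigma> v) \<mu> \<in> set prev"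
    using st unfolding pi2_step_def C_def Rel_def by auto
  define V where "V = C \<union> (\<Union>q\<in>vars \<phi>. vars (\<sigma> q))"
  have finV: "finite V" unfolding V_def C_def by (simp add: finite_vars)
  have "infinite (UNIV - V)" using inf finV by simp
  then obtain D where D: "finite D" "card D = card C" "D \<subseteq> UNIV - V"
    using infinite_arbitrarily_large by blast
  have finC: "finite C" unfolding C_def by simp
  obtain f where f: "bij_betw f C D" using finite_same_card_bij[OF finC D(1) D(2)[symmetric]] by blast
  have finj: "inj_on f C" and fC: "f ` C = D" using f by (auto simp: bij_betw_def)
  have fV: "\<And>v. v \<in> C \<Longrightarrow> f v \<notin> V" using fC D(3) by auto
  define \<theta> :: "'v \<Rightarrow> ('f,'v) form" where "\<theta> v = (if v \<in> r ` C then Var (the_inv_into C r v) else if v \<in> C then Var (f v) else Var v)" for v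
  define \<theta>' :: "'v \<Rightarrow> ('f,'v) form" where "\<theta>' w = (if w \<in> f ` C then Var (the_inv_into C f w) else Var w)" for w
  define \<sigma>' where "\<sigma>' q = (if q \<in> C then Var q else if q \<in> Rel then subst \<theta> (\<sigma> q) else Var q)" for q
  define \<tau> where "\<tau> v = (if v \<in> C then Var (r v) else \<sigma> v)" for v
  have fr: "\<And>q w. q \<in> Rel \<Longrightarrow> q \<notin> C \<Longrightarrow> w \<in> vars (\<sigma> q) \<Longrightarrow> w \<notin> r ` C"
    using fresh by blast
  have inv: "C_invariant C \<sigma>'"
    unfolding C_invariant_def
  proof (intro conjI ballI allI impI)
    fix p assume "p \<in> C" then show "\<sigma>' p = Var p" by (simp add: \<sigma>'_def)
  next
    fix q assume q: "q \<notin> C"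
    show "vars (\<sigma>' q) \<inter> C = {}"
    proof (cases "q \<in> Rel")
      case True
      have "\<And>w. w \<in> vars (\<sigma> q) \<Longrightarrow> vars (\<theta> w) \<inter> C = {}"
      proof -
        fix w assume w: "w \<in> vars (\<sigma> q)"
        then have "w \<notin> r ` C" using fr True q by blast
        moreover have "w \<in> C \<Longrightarrow> f w \<notin> C" using fV V_def by blast
        ultimately show "vars (\<theta> w) \<inter> C = {}" by (auto simp: \<theta>_def)
      qed
      then show ?thesis using True q by (auto simp: \<sigma>'_def vars_subst)
    next
      case False then show ?thesis using q by (simp add: \<sigma>'_def)
    qed
  qed
  have B: "\<forall>\<mu>\<in>set \<Gamma>. derivable S (subst \<sigma>' \<mu>)"
  proof
    fix \<mu> assume m: "\<mu> \<in> set \<Gamma>"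
    have "subst \<sigma>' \<mu> = subst \<theta> (subst \<tau> \<mu>)"
      unfolding subst_comp
    proof (rule subst_cong)
      fix v assume v: "v \<in> vars \<mu>"
      show "\<sigma>' v = subst \<theta> (\<tau> v)"
      proof (cases "v \<in> C")
        case True
        then have "r v \<in> r ` C" by blast
        then show ?thesis using True inj by (simp add: \<sigma>'_def \<tau>_def \<theta>_def the_inv_into_f_f)
      next
        case False
        then have "v \<in> Rel" using v m Rel_def by blast
        then show ?thesis using False by (simp add: \<sigma>'_def \<tau>_def)
      qed
    qed
    moreover have "derivable S (subst \<tau> \<mu>)"
      using prem m der unfolding \<tau>_def by blast
    ultimately show "derivable S (subst \<sigma>' \<mu>)" using derivable_subst by metis
  qed
  have "derivable S (subst \<sigma>' \<phi>)" using cond inv B C_def by blast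
  moreover have "subst \<sigma>' \<phi> = subst \<theta> (subst \<sigma> \<phi>)"
    unfolding subst_comp
  proof (rule subst_cong)
    fix v assume v: "v \<in> vars \<phi>"
    then have "v \<notin> C" "v \<in> Rel" using disj C_def Rel_def by auto
    then show "\<sigma>' v = subst \<theta> (\<sigma> v)" by (simp add: \<sigma>'_def)
  qed
  ultimately have "derivable S (subst \<theta>' (subst \<theta> (subst \<sigma> \<phi>)))"
    using derivable_subst by metis
  moreover have "subst \<theta>' (subst \<theta> (subst \<sigma> \<phi>)) = subst \<sigma> \<phi>"
    unfolding subst_comp
  proof (rule subst_cong)
    fix v assume v: "v \<in> vars \<phi>"
    then have vC: "v \<notin> C" "v \<in> Rel" using disj C_def Rel_def by auto
    have "subst (\<lambda>w. subst \<theta>' (\<theta> w)) (\<sigma> v) = subst Var (\<sigma> v)"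
    proof (rule subst_cong)
      fix w assume w: "w \<in> vars (\<sigma> v)"
      then have nr: "w \<notin> r ` C" using fr vC by blast
      have wV: "w \<in> V" using w v V_def by blast
      show "subst \<theta>' (\<theta> w) = Var w"
      proof (cases "w \<in> C")
        case True
        then show ?thesis using nr finj by (simp add: \<theta>_def \<theta>'_def the_inv_into_f_f)
      next
        case False
        have "w \<notin> f ` C" using wV fV by blast
        then show ?thesis using nr False by (simp add: \<theta>_def \<theta>'_def)
      qed
    qed
    then show "subst (\<lambda>w. subst \<theta>' (\<theta> w)) (\<sigma> v) = \<sigma> v" by (simp add: subst_Var)
  qed
  ultimately show ?thesis using psi by simp
qed

theorem mainTheorem2:
  fixes S :: "('f, 'v) hilbert"
    and ps :: "'v list" and \<Gamma> :: "('f, 'v) form list" and \<phi> :: "('f, 'v) form"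
  assumes "infinite (UNIV :: 'v set)"
    and "pi2_rule (ps, \<Gamma>, \<phi>)"
  shows "admissible S (ps, \<Gamma>, \<phi>) \<longleftrightarrow>
    (\<forall>\<sigma>. C_invariant (set ps) \<sigma> \<longrightarrow>
       (\<forall>\<mu>\<in>set \<Gamma>. derivable S (subst \<sigma> \<mu>)) \<longrightarrow> derivable S (subst \<sigma> \<phi>))"
proof
  assume adm: "admissible S (ps, \<Gamma>, \<phi>)"
  show "\<forall>\<sigma>. C_invariant (set ps) \<sigma> \<longrightarrow>
       (\<forall>\<mu>\<in>set \<Gamma>. derivable S (subst \<sigma> \<mu>)) \<longrightarrow> derivable S (subst \<sigma> \<phi>)"
  proof (intro allI impI)
    fix \<sigma> assume ci: "C_invariant (set ps) \<sigma>"
      and d: "\<forall>\<mu>\<in>set \<Gamma>. derivable S (subst \<sigma> \<mu>)"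
    obtain xs where xs: "valid S xs" "set (map (subst \<sigma>) \<Gamma>) \<subseteq> set xs"
      using valid_concat[of "map (subst \<sigma>) \<Gamma>" S] d by auto
    have cp: "\<And>p. p \<in> set ps \<Longrightarrow> \<sigma> p = Var p" and cq: "\<And>q. q \<notin> set ps \<Longrightarrow> vars (\<sigma> q) \<inter> set ps = {}"
      using ci unfolding C_invariant_def by auto
    have eq: "(\<lambda>v. if v \<in> set ps then Var (id v) else \<sigma> v) = \<sigma>"
      using cp by auto
    have st: "pi2_step (ps, \<Gamma>, \<phi>) xs (subst \<sigma> \<phi>)"
      unfolding pi2_step_def
      apply simp
      apply (rule exI[of _ \<sigma>], rule exI[of _ id])
      using cq xs(2) eq by (auto)
    have "derivable_ext S {(ps, \<Gamma>, \<phi>)} (subst \<sigma> \<phi>)"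
      unfolding derivable_ext_def
      apply (rule exI[of _ "xs @ [subst \<sigma> \<phi>]"])
      using xs(1) st unfolding valid_def by (auto simp: nth_append less_Suc_eq)
    then show "derivable S (subst \<sigma> \<phi>)" using adm unfolding admissible_def by blast
  qed
next
  assume cond: "\<forall>\<sigma>. C_invariant (set ps) \<sigma> \<longrightarrow>
       (\<forall>\<mu>\<in>set \<Gamma>. derivable S (subst \<sigma> \<mu>)) \<longrightarrow> derivable S (subst \<sigma> \<phi>)"
  have disj: "vars \<phi> \<inter> set ps = {}" using assms(2) unfolding pi2_rule_def by simp
  show "admissible S (ps, \<Gamma>, \<phi>)"
    unfolding admissible_def
  proof (intro allI impI)
    fix \<psi> assume "derivable_ext S {(ps, \<Gamma>, \<phi>)} \<psi>"
    then obtain xs where xs: "xs \<noteq> []" "last xs = \<psi>"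
      "\<forall>i<length xs. hilbert_step S (take i xs) (xs ! i) \<or> pi2_step (ps, \<Gamma>, \<phi>) (take i xs) (xs ! i)"
      unfolding derivable_ext_def by auto
    have all: "\<forall>i<length xs. derivable S (xs ! i)"
    proof (intro allI)
      fix i show "i < length xs \<longrightarrow> derivable S (xs ! i)"
      proof (induction i rule: less_induct)
        case (less i)
        show ?case
        proof
          assume i: "i < length xs"
          have pd: "\<forall>x\<in>set (take i xs). derivable S x"
            using less i by (auto simp: in_set_conv_nth)
          from xs(3) i show "derivable S (xs ! i)"
            using derivable_step[OF pd] key[OF assms(1) disj cond _ pd] by blast
        qed
      qed
    qed
    then show "derivable S \<psi>" using xs(1,2) by (metis last_conv_nth length_greater_0_conv diff_less zero_less_one)
  qed
qed

end
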